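(* Let $X$ be a class of groups such that $\rho(G)\in X$ for every group $G$, $X$ is closed under normal subgroups, and $X$ contains all abelian groups. Let $G$ be a group and $N$ a normal subgroup of $G$ such that $\rho(N)=\{e\}$ and $\rho(G/N)=\{e\}$. Then $\rho(G)=\{e\}$.
   Context: A class of groups is a class of groups containing the trivial group and closed under isomorphism. For a class $X$ and a group $G$, $\rho(G)=\rho_X(G)$ denotes the subgroup of $G$ generated by all normal subgroups of $G$ that belong to $X$. *)

theory Defs
  imports "HOL-Algebra.Algebra"
begin

text \<open>A class of groups, restricted to groups whose elements live in a fixed type 'c:
  a predicate on group structures that holds only for groups, contains the trivial
  groups and is closed under isomorphism.\<close>
definition group_class :: "('c monoid \<Rightarrow> bool) \<Rightarrow> bool" where
  "group_class P \<longleftrightarrow>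
     (\<forall>H. P H \<longrightarrow> group H) \<and>
     (\<forall>H. group H \<and> carrier H = {one H} \<longrightarrow> P H) \<and>
     (\<forall>H K. group H \<and> group K \<and> is_iso H K \<and> P H \<longrightarrow> P K)"

text \<open>Two such restrictions (to types 'a and 'b) of one and the same class of groups:
  isomorphic groups across the two types are in the class simultaneously.\<close>
definition compatible_classes :: "('a monoid \<Rightarrow> bool) \<Rightarrow> ('b monoid \<Rightarrow> bool) \<Rightarrow> bool" where
  "compatible_classes P Q \<longleftrightarrow>
     (\<forall>H K. group H \<and> group K \<and> is_iso H K \<longrightarrow> (P H \<longleftrightarrow> Q K))"

definition rho :: "('c monoid \<Rightarrow> bool) \<Rightarrow> 'c monoid \<Rightarrow> 'c set" where
  "rho P G = generate G (\<Union>{H. normal H G \<and> P (G\<lparr>carrier := H\<rparr>)})"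

definition rho_in_class :: "('c monoid \<Rightarrow> bool) \<Rightarrow> bool" where
  "rho_in_class P \<longleftrightarrow> (\<forall>H. group H \<longrightarrow> P (H\<lparr>carrier := rho P H\<rparr>))"

definition normal_closed :: "('c monoid \<Rightarrow> bool) \<Rightarrow> bool" where
  "normal_closed P \<longleftrightarrow> (\<forall>H K. P H \<and> normal K H \<longrightarrow> P (H\<lparr>carrier := K\<rparr>))"

definition contains_abelian :: "('c monoid \<Rightarrow> bool) \<Rightarrow> bool" where
  "contains_abelian P \<longleftrightarrow> (\<forall>H. comm_group H \<longrightarrow> P H)"

end

theory Submission
  imports Defs
begin

theorem lemma6p9:
  fixes P :: "'a monoid \<Rightarrow> bool" and Q :: "'a set monoid \<Rightarrow> bool"
    and G :: "'a monoid" and N :: "'a set"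
  assumes "group_class P" and "group_class Q" and "compatible_classes P Q"
    and "rho_in_class P" and "rho_in_class Q"
    and "normal_closed P" and "normal_closed Q"
    and "contains_abelian P" and "contains_abelian Q"
    and "group G" and "N \<lhd> G"
    and "rho P (G\<lparr>carrier := N\<rparr>) = {\<one>\<^bsub>G\<^esub>}"
    and "rho Q (G Mod N) = {\<one>\<^bsub>G Mod N\<^esub>}"
  shows "rho P G = {\<one>\<^bsub>G\<^esub>}"
proof -
  interpret G: group G by fact
  interpret N: normal N G by fact
  define R where "R = rho P G"
  have RN: "R \<lhd> G"
    unfolding R_def rho_def
  proof (rule G.normal_generateI)
    show "\<Union>{H. H \<lhd> G \<and> P (G\<lparr>carrier := H\<rparr>)} \<subseteq> carrier G"
    proof (rule Union_least)
      fix H assume "H \<in> {H. H \<lhd> G \<and> P (G\<lparr>carrier := H\<rparr>)}"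
      then have "subgroup H G" using normal_imp_subgroup by blast
      then show "H \<subseteq> carrier G" by (rule subgroup.subset)
    qed
  next
    fix h g assume "h \<in> \<Union>{H. H \<lhd> G \<and> P (G\<lparr>carrier := H\<rparr>)}" "g \<in> carrier G"
    then obtain H where "H \<lhd> G" "P (G\<lparr>carrier := H\<rparr>)" "h \<in> H" by (auto simp only: Union_iff mem_Collect_eq)
    have "g \<otimes>\<^bsub>G\<^esub> h \<otimes>\<^bsub>G\<^esub> inv\<^bsub>G\<^esub> g \<in> H"
      by (rule normal.inv_op_closed2[OF \<open>H \<lhd> G\<close> \<open>g \<in> carrier G\<close> \<open>h \<in> H\<close>])
    then show "g \<otimes>\<^bsub>G\<^esub> h \<otimes>\<^bsub>G\<^esub> inv\<^bsub>G\<^esub> g \<in> \<Union>{H. H \<lhd> G \<and> P (G\<lparr>carrier := H\<rparr>)}"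
      using \<open>H \<lhd> G\<close> \<open>P (G\<lparr>carrier := H\<rparr>)\<close> by (intro UnionI[of H]) simp_all
  qed
  have RS: "subgroup R G" using RN normal_imp_subgroup by blast
  have PR: "P (G\<lparr>carrier := R\<rparr>)"
    using assms(4) G.group_axioms unfolding rho_in_class_def R_def by simp
  have "N \<inter> R \<lhd> G\<lparr>carrier := R\<rparr>" by (rule G.normal_Int_subgroup[OF RS assms(11)])
  then have "P ((G\<lparr>carrier := R\<rparr>)\<lparr>carrier := N \<inter> R\<rparr>)"
    using assms(6) PR unfolding normal_closed_def by blast
  then have P1: "P ((G\<lparr>carrier := N\<rparr>)\<lparr>carrier := R \<inter> N\<rparr>)" by (simp add: Int_commute)
  have "R \<inter> N \<lhd> G\<lparr>carrier := N\<rparr>"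
    by (rule G.normal_Int_subgroup[OF N.subgroup_axioms RN])
  then have "R \<inter> N \<subseteq> rho P (G\<lparr>carrier := N\<rparr>)"
    unfolding rho_def using P1 by (auto intro: generate.incl)
  then have RNtriv: "R \<inter> N \<subseteq> {\<one>\<^bsub>G\<^esub>}" using assms(12) by simp
  define f where "f = (\<lambda>a. N #>\<^bsub>G\<^esub> a)"
  define I where "I = f ` R"
  have gh: "group_hom G (G Mod N) f"
    unfolding group_hom_def group_hom_axioms_def f_def
    using G.group_axioms N.factorgroup_is_group N.r_coset_hom_Mod by blast
  have IN: "I \<lhd> G Mod N"
    unfolding I_def
    by (rule normal.surj_hom_normal_subgroup[OF RN gh]) (simp add: f_def carrier_FactGroup)
  have Rsub: "R \<subseteq> carrier G" using RS subgroup.subset by blast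
  have hom: "f \<in> hom (G\<lparr>carrier := R\<rparr>) ((G Mod N)\<lparr>carrier := I\<rparr>)"
  proof (rule homI)
    fix x assume "x \<in> carrier (G\<lparr>carrier := R\<rparr>)"
    then show "f x \<in> carrier ((G Mod N)\<lparr>carrier := I\<rparr>)" by (simp add: I_def)
  next
    fix x y assume "x \<in> carrier (G\<lparr>carrier := R\<rparr>)" "y \<in> carrier (G\<lparr>carrier := R\<rparr>)"
    then have "x \<in> carrier G" "y \<in> carrier G" using Rsub by auto
    then show "f (x \<otimes>\<^bsub>G\<lparr>carrier := R\<rparr>\<^esub> y) = f x \<otimes>\<^bsub>(G Mod N)\<lparr>carrier := I\<rparr>\<^esub> f y"
      by (simp add: f_def N.rcos_sum)
  qed
  have inj: "inj_on f R"
  proof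
    fix x y assume xy: "x \<in> R" "y \<in> R" "f x = f y"
    have xG: "x \<in> carrier G" "y \<in> carrier G" using xy Rsub by auto
    have "x \<in> N #>\<^bsub>G\<^esub> y" using xy(3) G.rcos_self[OF xG(1) N.subgroup_axioms] unfolding f_def by metis
    then obtain n where n: "n \<in> N" "x = n \<otimes>\<^bsub>G\<^esub> y" unfolding r_coset_def by auto
    have nG: "n \<in> carrier G" using n N.subset by auto
    have "n = x \<otimes>\<^bsub>G\<^esub> inv\<^bsub>G\<^esub> y" using n nG xG by (simp add: G.m_assoc)
    then have "n \<in> R" using xy RS by (simp add: subgroup.m_closed subgroup.m_inv_closed)
    then have "n = \<one>\<^bsub>G\<^esub>" using n RNtriv by auto
    then show "x = y" using n xG by simp
  qed
  have iso: "f \<in> iso (G\<lparr>carrier := R\<rparr>) ((G Mod N)\<lparr>carrier := I\<rparr>)"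
    unfolding iso_def using hom inj by (simp add: bij_betw_def I_def)
  have g1: "group (G\<lparr>carrier := R\<rparr>)" using RS G.subgroup_imp_group by blast
  have g2: "group ((G Mod N)\<lparr>carrier := I\<rparr>)"
    using IN normal_imp_subgroup group.subgroup_imp_group N.factorgroup_is_group by blast
  have QI: "Q ((G Mod N)\<lparr>carrier := I\<rparr>)"
    using assms(3) g1 g2 iso PR unfolding compatible_classes_def is_iso_def by blast
  have "I \<subseteq> rho Q (G Mod N)"
    unfolding rho_def using IN QI by (auto intro: generate.incl)
  then have Itriv: "I \<subseteq> {N}" using assms(13) by simp
  have "R \<subseteq> N"
  proof
    fix r assume r: "r \<in> R"
    then have "N #>\<^bsub>G\<^esub> r = N" using Itriv unfolding I_def f_def by auto
    then show "r \<in> N" using G.rcos_self[OF _ N.subgroup_axioms] r Rsub by (metis subsetD)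
  qed
  then have "R \<subseteq> {\<one>\<^bsub>G\<^esub>}" using RNtriv by auto
  moreover have "\<one>\<^bsub>G\<^esub> \<in> R" using RS subgroup.one_closed by blast
  ultimately show ?thesis unfolding R_def by auto
qed

end
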